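(* Let $R$ be a ring such that the set $\max\mathrm{Den}_l(R)$ of maximal left denominator sets of $R$ is finite, $\max\mathrm{Den}_l(R)=\{S_1,\ldots,S_n\}$ (with the $S_i$ distinct). Let $\mathfrak{a}_i:=\mathrm{ass}(S_i)$, let $\sigma_i:R\to R_i:=S_i^{-1}R$, $r\mapsto \frac{r}{1}=r_i$, and let $\sigma:=\prod_{i=1}^n\sigma_i:R\to\prod_{i=1}^n R_i$, $r\mapsto (r_1,\ldots,r_n)$. The following statements are equivalent: (1) $R$ is a left localizable ring; (2) $\mathfrak{l}_R=0$ and the rings $R_1,\ldots,R_n$ are division rings; (3) the homomorphism $\sigma$ is injective and the rings $R_1,\ldots,R_n$ are division rings.
   Context: All rings are associative with $1$. A multiplicative subset $S$ of a ring $R$ is a subset with $1\in S$, $0\notin S$, closed under multiplication. It is a left Ore set if $Sr\cap Rs\neq\emptyset$ for all $r\in R$, $s\in S$. For a left Ore set $S$, $\mathrm{ass}(S):=\{r\in R: sr=0 \text{ for some } s\in S\}$. A left Ore set $S$ is a left denominator set if $rs=0$ with $r\in R$, $s\in S$ implies $tr=0$ for some $t\in S$. $\mathrm{Den}_l(R)$ denotes the set of left denominator sets of $R$, $S^{-1}R$ the left localization (ring of left fractions $s^{-1}r$) of $R$ at $S\in\mathrm{Den}_l(R)$, and $\max\mathrm{Den}_l(R)$ the set of maximal elements of the poset $(\mathrm{Den}_l(R),\subseteq)$. The left localization radical is $\mathfrak{l}_R:=\bigcap_{S\in\max\mathrm{Den}_l(R)}\mathrm{ass}(S)$. An element $r\in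 R$ is left localizable if $r\in S$ for some $S\in\mathrm{Den}_l(R)$; a ring $R$ is a left localizable ring if every nonzero element of $R$ is left localizable. *)

theory Defs
  imports "HOL-Algebra.Ring" "HOL-Algebra.RingHom"
begin

definition mult_subset :: "('a, 'm) ring_scheme \<Rightarrow> 'a set \<Rightarrow> bool" where
  "mult_subset R S \<longleftrightarrow> S \<subseteq> carrier R \<and> \<one>\<^bsub>R\<^esub> \<in> S \<and> \<zero>\<^bsub>R\<^esub> \<notin> S \<and>
     (\<forall>s\<in>S. \<forall>t\<in>S. s \<otimes>\<^bsub>R\<^esub> t \<in> S)"

definition left_ore_set :: "('a, 'm) ring_scheme \<Rightarrow> 'a set \<Rightarrow> bool" where
  "left_ore_set R S \<longleftrightarrow> mult_subset R S \<and>
     (\<forall>r\<in>carrier R. \<forall>s\<in>S. \<exists>s'\<in>S. \<exists>r'\<in>carrier R. s' \<otimes>\<^bsub>R\<^esub> r = r' \<otimes>\<^bsub>R\<^esub> s)"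

definition ass :: "('a, 'm) ring_scheme \<Rightarrow> 'a set \<Rightarrow> 'a set" where
  "ass R S = {r \<in> carrier R. \<exists>s\<in>S. s \<otimes>\<^bsub>R\<^esub> r = \<zero>\<^bsub>R\<^esub>}"

definition left_den_set :: "('a, 'm) ring_scheme \<Rightarrow> 'a set \<Rightarrow> bool" where
  "left_den_set R S \<longleftrightarrow> left_ore_set R S \<and>
     (\<forall>r\<in>carrier R. \<forall>s\<in>S. r \<otimes>\<^bsub>R\<^esub> s = \<zero>\<^bsub>R\<^esub> \<longrightarrow> (\<exists>t\<in>S. t \<otimes>\<^bsub>R\<^esub> r = \<zero>\<^bsub>R\<^esub>))"

definition Den_l :: "('a, 'm) ring_scheme \<Rightarrow> 'a set set" where
  "Den_l R = {S. left_den_set R S}"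

definition maxDen_l :: "('a, 'm) ring_scheme \<Rightarrow> 'a set set" where
  "maxDen_l R = {S \<in> Den_l R. \<forall>T\<in>Den_l R. S \<subseteq> T \<longrightarrow> T = S}"

definition loc_radical :: "('a, 'm) ring_scheme \<Rightarrow> 'a set" where
  "loc_radical R = carrier R \<inter> (\<Inter>S\<in>maxDen_l R. ass R S)"

definition left_localizable_elem :: "('a, 'm) ring_scheme \<Rightarrow> 'a \<Rightarrow> bool" where
  "left_localizable_elem R r \<longleftrightarrow> (\<exists>S\<in>Den_l R. r \<in> S)"

definition left_localizable_ring :: "('a, 'm) ring_scheme \<Rightarrow> bool" where
  "left_localizable_ring R \<longleftrightarrow>
     (\<forall>r\<in>carrier R. r \<noteq> \<zero>\<^bsub>R\<^esub> \<longrightarrow> left_localizable_elem R r)"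

definition division_ring :: "('b, 'n) ring_scheme \<Rightarrow> bool" where
  "division_ring Q \<longleftrightarrow> ring Q \<and> \<one>\<^bsub>Q\<^esub> \<noteq> \<zero>\<^bsub>Q\<^esub> \<and>
     (\<forall>q\<in>carrier Q. q \<noteq> \<zero>\<^bsub>Q\<^esub> \<longrightarrow> q \<in> Units Q)"

(* (Q, sigma) is the left localization S^{-1}R of R at S with canonical map r \<mapsto> r/1:
   the standard characterization of the ring of left fractions:
   sigma is a ring homomorphism, sigma(S) consists of units,
   every element of Q is a left fraction sigma(s)^{-1} sigma(r), and ker sigma = ass S. *)
definition is_left_localization ::
  "('a, 'm) ring_scheme \<Rightarrow> 'a set \<Rightarrow> ('b, 'n) ring_scheme \<Rightarrow> ('a \<Rightarrow> 'b) \<Rightarrow> bool" where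
  "is_left_localization R S Q \<sigma> \<longleftrightarrow>
     ring Q \<and> \<sigma> \<in> ring_hom R Q \<and>
     (\<forall>s\<in>S. \<sigma> s \<in> Units Q) \<and>
     (\<forall>q\<in>carrier Q. \<exists>s\<in>S. \<exists>r\<in>carrier R. q = inv\<^bsub>Q\<^esub> (\<sigma> s) \<otimes>\<^bsub>Q\<^esub> \<sigma> r) \<and>
     {r \<in> carrier R. \<sigma> r = \<zero>\<^bsub>Q\<^esub>} = ass R S"

end

theory Submission
  imports Defs
begin

lemma minus_zero_eq:
  assumes "ring R" "a \<in> carrier R" "b \<in> carrier R"
  shows "a \<ominus>\<^bsub>R\<^esub> b = \<zero>\<^bsub>R\<^esub> \<longleftrightarrow> a = b"
proof -
  interpret R: ring R by fact
  show ?thesis using assms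
    by (metis a_minus_def R.add.inv_closed R.minus_equality R.r_neg)
qed

lemma den_props:
  assumes "left_den_set R S"
  shows "S \<subseteq> carrier R" "\<one>\<^bsub>R\<^esub> \<in> S" "\<zero>\<^bsub>R\<^esub> \<notin> S"
    "\<And>s t. s \<in> S \<Longrightarrow> t \<in> S \<Longrightarrow> s \<otimes>\<^bsub>R\<^esub> t \<in> S"
    "\<And>r s. r \<in> carrier R \<Longrightarrow> s \<in> S \<Longrightarrow> \<exists>s'\<in>S. \<exists>r'\<in>carrier R. s' \<otimes>\<^bsub>R\<^esub> r = r' \<otimes>\<^bsub>R\<^esub> s"
    "\<And>r s. r \<in> carrier R \<Longrightarrow> s \<in> S \<Longrightarrow> r \<otimes>\<^bsub>R\<^esub> s = \<zero>\<^bsub>R\<^esub> \<Longrightarrow> \<exists>t\<in>S. t \<otimes>\<^bsub>R\<^esub> r = \<zero>\<^bsub>R\<^esub>"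
  using assms unfolding left_den_set_def left_ore_set_def mult_subset_def by blast+

lemma S_ass_disj:
  assumes "ring R" "left_den_set R S" "x \<in> S"
  shows "x \<notin> ass R S"
proof
  assume "x \<in> ass R S"
  then obtain s where "s \<in> S" "s \<otimes>\<^bsub>R\<^esub> x = \<zero>\<^bsub>R\<^esub>" unfolding ass_def by blast
  with den_props[OF assms(2)] assms(3) show False by metis
qed

lemma zero_in_ass:
  assumes "ring R" "left_den_set R S"
  shows "\<zero>\<^bsub>R\<^esub> \<in> ass R S"
proof -
  interpret R: ring R by fact
  show ?thesis using den_props[OF assms(2)] unfolding ass_def by force
qed

lemma ass_left:
  assumes "ring R" "left_den_set R S" "x \<in> ass R S" "r \<in> carrier R"
  shows "r \<otimes>\<^bsub>R\<^esub> x \<in> ass R S"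
proof -
  interpret R: ring R by fact
  obtain s where s: "s \<in> S" "s \<otimes>\<^bsub>R\<^esub> x = \<zero>\<^bsub>R\<^esub>" "x \<in> carrier R"
    using assms(3) unfolding ass_def by blast
  obtain s' r' where o: "s' \<in> S" "r' \<in> carrier R" "s' \<otimes>\<^bsub>R\<^esub> r = r' \<otimes>\<^bsub>R\<^esub> s"
    using den_props(5)[OF assms(2) assms(4) s(1)] by blast
  have sc: "s \<in> carrier R" "s' \<in> carrier R" using den_props(1)[OF assms(2)] s o by auto
  have "s' \<otimes>\<^bsub>R\<^esub> (r \<otimes>\<^bsub>R\<^esub> x) = r' \<otimes>\<^bsub>R\<^esub> (s \<otimes>\<^bsub>R\<^esub> x)"
    using sc s o assms(4) by (metis R.m_assoc)
  also have "\<dots> = \<zero>\<^bsub>R\<^esub>" using s o by simp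
  finally show ?thesis using o s assms(4) unfolding ass_def by auto
qed

lemma ass_right:
  assumes "ring R" "left_den_set R S" "x \<in> ass R S" "r \<in> carrier R"
  shows "x \<otimes>\<^bsub>R\<^esub> r \<in> ass R S"
proof -
  interpret R: ring R by fact
  obtain s where s: "s \<in> S" "s \<otimes>\<^bsub>R\<^esub> x = \<zero>\<^bsub>R\<^esub>" "x \<in> carrier R"
    using assms(3) unfolding ass_def by blast
  have "s \<in> carrier R" using den_props(1)[OF assms(2)] s by auto
  then have "s \<otimes>\<^bsub>R\<^esub> (x \<otimes>\<^bsub>R\<^esub> r) = \<zero>\<^bsub>R\<^esub>" using s assms(4) by (metis R.m_assoc R.l_null)
  then show ?thesis using s assms(4) unfolding ass_def by auto
qed

lemma ass_cancel_left:
  assumes "ring R" "left_den_set R S" "s \<in> S" "x \<in> carrier R" "s \<otimes>\<^bsub>R\<^esub> x \<in> ass R S"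
  shows "x \<in> ass R S"
proof -
  interpret R: ring R by fact
  obtain t where t: "t \<in> S" "t \<otimes>\<^bsub>R\<^esub> (s \<otimes>\<^bsub>R\<^esub> x) = \<zero>\<^bsub>R\<^esub>"
    using assms(5) unfolding ass_def by blast
  have c: "t \<in> carrier R" "s \<in> carrier R" using den_props(1)[OF assms(2)] t assms by auto
  have "(t \<otimes>\<^bsub>R\<^esub> s) \<otimes>\<^bsub>R\<^esub> x = \<zero>\<^bsub>R\<^esub>" using t c assms(4) by (metis R.m_assoc)
  moreover have "t \<otimes>\<^bsub>R\<^esub> s \<in> S" using den_props(4)[OF assms(2)] t assms(3) by blast
  ultimately show ?thesis using assms(4) unfolding ass_def by blast
qed

lemma ass_cancel_right:
  assumes "ring R" "left_den_set R S" "s \<in> S" "x \<in> carrier R" "x \<otimes>\<^bsub>R\<^esub> s \<in> ass R S"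
  shows "x \<in> ass R S"
proof -
  interpret R: ring R by fact
  obtain t where t: "t \<in> S" "t \<otimes>\<^bsub>R\<^esub> (x \<otimes>\<^bsub>R\<^esub> s) = \<zero>\<^bsub>R\<^esub>"
    using assms(5) unfolding ass_def by blast
  have c: "t \<in> carrier R" "s \<in> carrier R" using den_props(1)[OF assms(2)] t assms by auto
  have "(t \<otimes>\<^bsub>R\<^esub> x) \<otimes>\<^bsub>R\<^esub> s = \<zero>\<^bsub>R\<^esub>" using t c assms(4) by (metis R.m_assoc)
  then obtain u where u: "u \<in> S" "u \<otimes>\<^bsub>R\<^esub> (t \<otimes>\<^bsub>R\<^esub> x) = \<zero>\<^bsub>R\<^esub>"
    using den_props(6)[OF assms(2), of "t \<otimes>\<^bsub>R\<^esub> x" s] c assms by blast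
  have "u \<in> carrier R" using den_props(1)[OF assms(2)] u by auto
  then have "(u \<otimes>\<^bsub>R\<^esub> t) \<otimes>\<^bsub>R\<^esub> x = \<zero>\<^bsub>R\<^esub>" using u c assms(4) by (metis R.m_assoc)
  moreover have "u \<otimes>\<^bsub>R\<^esub> t \<in> S" using den_props(4)[OF assms(2)] t u by blast
  ultimately show ?thesis using assms(4) unfolding ass_def by blast
qed

lemma loc_props:
  assumes "is_left_localization R S Q \<sigma>"
  shows "ring Q" "\<sigma> \<in> ring_hom R Q" "\<And>s. s\<in>S \<Longrightarrow> \<sigma> s \<in> Units Q"
    "\<And>q. q\<in>carrier Q \<Longrightarrow> \<exists>s\<in>S. \<exists>r\<in>carrier R. q = inv\<^bsub>Q\<^esub> (\<sigma> s) \<otimes>\<^bsub>Q\<^esub> \<sigma> r"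
    "\<And>x. x \<in> carrier R \<Longrightarrow> \<sigma> x = \<zero>\<^bsub>Q\<^esub> \<longleftrightarrow> x \<in> ass R S"
  using assms unfolding is_left_localization_def by (blast, blast, blast, blast, blast)

lemma loc_hom_ring:
  assumes "ring R" "is_left_localization R S Q \<sigma>"
  shows "ring_hom_ring R Q \<sigma>"
  using assms loc_props[OF assms(2)] by (simp add: ring_hom_ring_def ring_hom_ring_axioms_def)

lemma loc_eq:
  assumes "ring R" "left_den_set R S" "is_left_localization R S Q \<sigma>"
    "a \<in> carrier R" "b \<in> carrier R" "\<sigma> a = \<sigma> b"
  shows "\<exists>t\<in>S. t \<otimes>\<^bsub>R\<^esub> a = t \<otimes>\<^bsub>R\<^esub> b"
proof -
  interpret R: ring R by fact
  interpret Q: ring Q using loc_props[OF assms(3)] by blast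
  interpret h: ring_hom_ring R Q \<sigma> using loc_hom_ring[OF assms(1,3)] .
  have "\<sigma> (a \<ominus>\<^bsub>R\<^esub> b) = \<sigma> a \<ominus>\<^bsub>Q\<^esub> \<sigma> b"
    using assms(4,5) by (simp add: a_minus_def)
  also have "\<dots> = \<zero>\<^bsub>Q\<^esub>" using assms(4,5,6) by (simp add: a_minus_def Q.r_neg)
  finally have "a \<ominus>\<^bsub>R\<^esub> b \<in> ass R S" using loc_props(5)[OF assms(3)] assms(4,5) by simp
  then obtain t where t: "t \<in> S" "t \<otimes>\<^bsub>R\<^esub> (a \<ominus>\<^bsub>R\<^esub> b) = \<zero>\<^bsub>R\<^esub>" unfolding ass_def by blast
  have tc: "t \<in> carrier R" using t den_props(1)[OF assms(2)] by auto
  have "t \<otimes>\<^bsub>R\<^esub> (a \<ominus>\<^bsub>R\<^esub> b) = t \<otimes>\<^bsub>R\<^esub> a \<ominus>\<^bsub>R\<^esub> t \<otimes>\<^bsub>R\<^esub> b"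
    using tc assms(4,5) by (simp add: a_minus_def R.r_distr R.r_minus)
  then have "t \<otimes>\<^bsub>R\<^esub> a \<ominus>\<^bsub>R\<^esub> t \<otimes>\<^bsub>R\<^esub> b = \<zero>\<^bsub>R\<^esub>" using t by simp
  then have "t \<otimes>\<^bsub>R\<^esub> a = t \<otimes>\<^bsub>R\<^esub> b"
    using minus_zero_eq[OF assms(1), of "t \<otimes>\<^bsub>R\<^esub> a" "t \<otimes>\<^bsub>R\<^esub> b"] tc assms(4,5) by simp
  then show ?thesis using t by blast
qed

lemma loc_one_ne_zero:
  assumes "ring R" "left_den_set R S" "is_left_localization R S Q \<sigma>"
  shows "\<one>\<^bsub>Q\<^esub> \<noteq> \<zero>\<^bsub>Q\<^esub>"
proof
  assume a: "\<one>\<^bsub>Q\<^esub> = \<zero>\<^bsub>Q\<^esub>"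
  interpret R: ring R by fact
  have "\<sigma> \<one>\<^bsub>R\<^esub> = \<one>\<^bsub>Q\<^esub>" using loc_props(2)[OF assms(3)] by (simp add: ring_hom_one)
  then have "\<one>\<^bsub>R\<^esub> \<in> ass R S" using loc_props(5)[OF assms(3)] a by simp
  then show False using S_ass_disj[OF assms(1,2)] den_props(2)[OF assms(2)] by blast
qed

lemma monoid_units_lr:
  assumes "monoid Q" "x \<in> carrier Q" "l \<in> carrier Q" "r \<in> carrier Q"
    "l \<otimes>\<^bsub>Q\<^esub> x = \<one>\<^bsub>Q\<^esub>" "x \<otimes>\<^bsub>Q\<^esub> r = \<one>\<^bsub>Q\<^esub>"
  shows "x \<in> Units Q"
proof -
  interpret Q: monoid Q by fact
  have "l = l \<otimes>\<^bsub>Q\<^esub> (x \<otimes>\<^bsub>Q\<^esub> r)" using assms by simp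
  also have "\<dots> = r" using assms by (metis Q.m_assoc Q.l_one)
  finally show ?thesis using assms unfolding Units_def by auto
qed

lemma U_den:
  assumes "ring R" "left_den_set R S" "is_left_localization R S Q \<sigma>"
  shows "left_den_set R {r \<in> carrier R. \<sigma> r \<in> Units Q}" (is "left_den_set R ?U")
proof -
  interpret R: ring R by fact
  interpret Q: ring Q using loc_props[OF assms(3)] by blast
  interpret h: ring_hom_ring R Q \<sigma> using loc_hom_ring[OF assms(1,3)] .
  have SU: "S \<subseteq> ?U" using den_props(1)[OF assms(2)] loc_props(3)[OF assms(3)] by auto
  have ms: "mult_subset R ?U"
    unfolding mult_subset_def
  proof (intro conjI ballI)
    show "?U \<subseteq> carrier R" by auto
    show "\<one>\<^bsub>R\<^esub> \<in> ?U" by simp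
    show "\<zero>\<^bsub>R\<^esub> \<notin> ?U"
    proof
      assume "\<zero>\<^bsub>R\<^esub> \<in> ?U"
      then have "\<zero>\<^bsub>Q\<^esub> \<in> Units Q" by simp
      then obtain y where "y \<in> carrier Q" "y \<otimes>\<^bsub>Q\<^esub> \<zero>\<^bsub>Q\<^esub> = \<one>\<^bsub>Q\<^esub>" unfolding Units_def by blast
      then show False using loc_one_ne_zero[OF assms] by simp
    qed
    fix s t assume "s \<in> ?U" "t \<in> ?U"
    then show "s \<otimes>\<^bsub>R\<^esub> t \<in> ?U" by (simp add: Q.Units_m_closed)
  qed
  have ore: "\<forall>r\<in>carrier R. \<forall>u\<in>?U. \<exists>s'\<in>?U. \<exists>r'\<in>carrier R. s' \<otimes>\<^bsub>R\<^esub> r = r' \<otimes>\<^bsub>R\<^esub> u"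
  proof (intro ballI)
    fix r u assume r: "r \<in> carrier R" and u: "u \<in> ?U"
    define q where "q = \<sigma> r \<otimes>\<^bsub>Q\<^esub> inv\<^bsub>Q\<^esub> (\<sigma> u)"
    have qc: "q \<in> carrier Q" using r u unfolding q_def by auto
    obtain s x where sx: "s \<in> S" "x \<in> carrier R" "q = inv\<^bsub>Q\<^esub> (\<sigma> s) \<otimes>\<^bsub>Q\<^esub> \<sigma> x"
      using loc_props(4)[OF assms(3) qc] by blast
    have sc: "s \<in> carrier R" using sx den_props(1)[OF assms(2)] by auto
    have su: "\<sigma> s \<in> Units Q" using loc_props(3)[OF assms(3) sx(1)] .
    have e1: "\<sigma> s \<otimes>\<^bsub>Q\<^esub> q = \<sigma> x"
      using sx su sc by (simp add: Q.m_assoc[symmetric])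
    have e2: "q \<otimes>\<^bsub>Q\<^esub> \<sigma> u = \<sigma> r"
      using u r unfolding q_def by (simp add: Q.m_assoc)
    have eqs: "\<sigma> (s \<otimes>\<^bsub>R\<^esub> r) = \<sigma> (x \<otimes>\<^bsub>R\<^esub> u)"
    proof -
      have "\<sigma> (s \<otimes>\<^bsub>R\<^esub> r) = \<sigma> s \<otimes>\<^bsub>Q\<^esub> (q \<otimes>\<^bsub>Q\<^esub> \<sigma> u)" using sc r e2 by simp
      also have "\<dots> = (\<sigma> s \<otimes>\<^bsub>Q\<^esub> q) \<otimes>\<^bsub>Q\<^esub> \<sigma> u" using sc u qc by (simp add: Q.m_assoc)
      also have "\<dots> = \<sigma> (x \<otimes>\<^bsub>R\<^esub> u)" using e1 sx u by simp
      finally show ?thesis .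
    qed
    then obtain t where t: "t \<in> S" "t \<otimes>\<^bsub>R\<^esub> (s \<otimes>\<^bsub>R\<^esub> r) = t \<otimes>\<^bsub>R\<^esub> (x \<otimes>\<^bsub>R\<^esub> u)"
      using loc_eq[OF assms, of "s \<otimes>\<^bsub>R\<^esub> r" "x \<otimes>\<^bsub>R\<^esub> u"] sc r sx u eqs by blast
    have tc: "t \<in> carrier R" using t den_props(1)[OF assms(2)] by auto
    have "(t \<otimes>\<^bsub>R\<^esub> s) \<otimes>\<^bsub>R\<^esub> r = (t \<otimes>\<^bsub>R\<^esub> x) \<otimes>\<^bsub>R\<^esub> u"
      using t tc sc sx u r by (simp add: R.m_assoc)
    moreover have "t \<otimes>\<^bsub>R\<^esub> s \<in> ?U" using SU den_props(4)[OF assms(2) t(1) sx(1)] by blast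
    ultimately show "\<exists>s'\<in>?U. \<exists>r'\<in>carrier R. s' \<otimes>\<^bsub>R\<^esub> r = r' \<otimes>\<^bsub>R\<^esub> u"
      using tc sx by blast
  qed
  have den: "\<forall>r\<in>carrier R. \<forall>u\<in>?U. r \<otimes>\<^bsub>R\<^esub> u = \<zero>\<^bsub>R\<^esub> \<longrightarrow> (\<exists>t\<in>?U. t \<otimes>\<^bsub>R\<^esub> r = \<zero>\<^bsub>R\<^esub>)"
  proof (intro ballI impI)
    fix r u assume r: "r \<in> carrier R" and u: "u \<in> ?U" and z: "r \<otimes>\<^bsub>R\<^esub> u = \<zero>\<^bsub>R\<^esub>"
    have "\<sigma> r \<otimes>\<^bsub>Q\<^esub> \<sigma> u = \<zero>\<^bsub>Q\<^esub>" using r u z by (metis h.hom_mult h.hom_zero mem_Collect_eq)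
    then have "\<sigma> r \<otimes>\<^bsub>Q\<^esub> \<sigma> u \<otimes>\<^bsub>Q\<^esub> inv\<^bsub>Q\<^esub> (\<sigma> u) = \<zero>\<^bsub>Q\<^esub>" using u by simp
    then have "\<sigma> r = \<zero>\<^bsub>Q\<^esub>" using r u by (simp add: Q.m_assoc)
    then have "r \<in> ass R S" using loc_props(5)[OF assms(3)] r by simp
    then show "\<exists>t\<in>?U. t \<otimes>\<^bsub>R\<^esub> r = \<zero>\<^bsub>R\<^esub>" using SU unfolding ass_def by blast
  qed
  show ?thesis using ms ore den unfolding left_den_set_def left_ore_set_def by blast
qed


lemma chain_union_den:
  assumes "ring R" "C \<noteq> {}" "C \<subseteq> Den_l R" "\<forall>X\<in>C. \<forall>Y\<in>C. X \<subseteq> Y \<or> Y \<subseteq> X"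
  shows "\<Union>C \<in> Den_l R"
proof -
  have D: "\<And>D. D \<in> C \<Longrightarrow> left_den_set R D" using assms(3) unfolding Den_l_def by blast
  have ms: "mult_subset R (\<Union>C)"
    unfolding mult_subset_def
  proof (intro conjI ballI)
    show "\<Union>C \<subseteq> carrier R" using D den_props(1) by blast
    show "\<one>\<^bsub>R\<^esub> \<in> \<Union>C" using D den_props(2) assms(2) by blast
    show "\<zero>\<^bsub>R\<^esub> \<notin> \<Union>C" using D den_props(3) by blast
    fix s t assume "s \<in> \<Union>C" "t \<in> \<Union>C"
    then obtain X Y where "X \<in> C" "Y \<in> C" "s \<in> X" "t \<in> Y" by blast
    then show "s \<otimes>\<^bsub>R\<^esub> t \<in> \<Union>C" using assms(4) D den_props(4)
      by (metis UnionI subsetD)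
  qed
  have ore: "\<forall>r\<in>carrier R. \<forall>s\<in>\<Union>C. \<exists>s'\<in>\<Union>C. \<exists>r'\<in>carrier R. s' \<otimes>\<^bsub>R\<^esub> r = r' \<otimes>\<^bsub>R\<^esub> s"
    using D den_props(5) by (meson UnionE UnionI)
  have den: "\<forall>r\<in>carrier R. \<forall>s\<in>\<Union>C. r \<otimes>\<^bsub>R\<^esub> s = \<zero>\<^bsub>R\<^esub> \<longrightarrow> (\<exists>t\<in>\<Union>C. t \<otimes>\<^bsub>R\<^esub> r = \<zero>\<^bsub>R\<^esub>)"
    using D den_props(6) by (meson UnionE UnionI)
  show ?thesis using ms ore den unfolding Den_l_def left_den_set_def left_ore_set_def by blast
qed

lemma den_in_max:
  assumes "ring R" "T \<in> Den_l R"
  shows "\<exists>M\<in>maxDen_l R. T \<subseteq> M"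
proof -
  let ?A = "{D \<in> Den_l R. T \<subseteq> D}"
  have "\<forall>C\<in>chains ?A. \<exists>U\<in>?A. \<forall>X\<in>C. X \<subseteq> U"
  proof
    fix C assume C: "C \<in> chains ?A"
    show "\<exists>U\<in>?A. \<forall>X\<in>C. X \<subseteq> U"
    proof (cases "C = {}")
      case True then show ?thesis using assms(2) by blast
    next
      case False
      have "\<Union>C \<in> Den_l R"
        using chain_union_den[OF assms(1) False] C unfolding chains_def chain_subset_def by blast
      moreover have "T \<subseteq> \<Union>C" using False C unfolding chains_def by blast
      ultimately show ?thesis by blast
    qed
  qed
  then obtain M where M: "M \<in> ?A" "\<forall>X\<in>?A. M \<subseteq> X \<longrightarrow> X = M" using Zorn_Lemma2 by blast
  have "M \<in> maxDen_l R" unfolding maxDen_l_def using M by blast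
  then show ?thesis using M by blast
qed


inductive_set gen :: "('a, 'm) ring_scheme \<Rightarrow> 'a set \<Rightarrow> 'a set" for R X where
  gen_one: "\<one>\<^bsub>R\<^esub> \<in> gen R X"
| gen_step: "g \<in> X \<Longrightarrow> m \<in> gen R X \<Longrightarrow> g \<otimes>\<^bsub>R\<^esub> m \<in> gen R X"

lemma gen_den:
  assumes "ring R" "\<forall>D\<in>F. left_den_set R D"
    "z \<in> Z" "Z \<subseteq> carrier R" "\<zero>\<^bsub>R\<^esub> \<notin> Z" "\<forall>g\<in>\<Union>F. \<forall>w\<in>Z. g \<otimes>\<^bsub>R\<^esub> w \<in> Z"
  shows "left_den_set R (gen R (\<Union>F))"
proof -
  interpret R: ring R by fact
  let ?M = "gen R (\<Union>F)"
  have Xc: "\<Union>F \<subseteq> carrier R" using assms(2) den_props(1) by blast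
  have Mc: "?M \<subseteq> carrier R"
  proof
    fix m assume "m \<in> ?M" then show "m \<in> carrier R"
      by induct (use Xc in auto)
  qed
  have Mmult: "\<And>m1 m2. m1 \<in> ?M \<Longrightarrow> m2 \<in> ?M \<Longrightarrow> m1 \<otimes>\<^bsub>R\<^esub> m2 \<in> ?M"
  proof -
    fix m1 m2 assume "m1 \<in> ?M" "m2 \<in> ?M"
    then show "m1 \<otimes>\<^bsub>R\<^esub> m2 \<in> ?M"
    proof induct
      case gen_one then show ?case using Mc by (metis R.l_one subsetD)
    next
      case (gen_step g m)
      then have "(g \<otimes>\<^bsub>R\<^esub> m) \<otimes>\<^bsub>R\<^esub> m2 = g \<otimes>\<^bsub>R\<^esub> (m \<otimes>\<^bsub>R\<^esub> m2)"
        using Xc Mc by (meson R.m_assoc gen.gen_step subsetD)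
      then show ?case using gen_step gen.gen_step by metis
    qed
  qed
  have nz: "\<And>m. m \<in> ?M \<Longrightarrow> m \<otimes>\<^bsub>R\<^esub> z \<in> Z"
  proof -
    fix m assume "m \<in> ?M" then show "m \<otimes>\<^bsub>R\<^esub> z \<in> Z"
    proof induct
      case gen_one then show ?case using assms(3,4) by auto
    next
      case (gen_step g m)
      then have "(g \<otimes>\<^bsub>R\<^esub> m) \<otimes>\<^bsub>R\<^esub> z = g \<otimes>\<^bsub>R\<^esub> (m \<otimes>\<^bsub>R\<^esub> z)"
        using Xc Mc assms(3,4) by (meson R.m_assoc subsetD)
      then show ?case using gen_step assms(6) by metis
    qed
  qed
  have M0: "\<zero>\<^bsub>R\<^esub> \<notin> ?M"
  proof
    assume "\<zero>\<^bsub>R\<^esub> \<in> ?M"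
    then have "\<zero>\<^bsub>R\<^esub> \<otimes>\<^bsub>R\<^esub> z \<in> Z" by (rule nz)
    then show False using assms(3,4,5) by auto
  qed
  have ore: "\<And>m. m \<in> ?M \<Longrightarrow> \<forall>r\<in>carrier R. \<exists>m'\<in>?M. \<exists>r'\<in>carrier R. m' \<otimes>\<^bsub>R\<^esub> r = r' \<otimes>\<^bsub>R\<^esub> m"
  proof -
    fix m assume "m \<in> ?M"
    then show "\<forall>r\<in>carrier R. \<exists>m'\<in>?M. \<exists>r'\<in>carrier R. m' \<otimes>\<^bsub>R\<^esub> r = r' \<otimes>\<^bsub>R\<^esub> m"
    proof induct
      case gen_one
      show ?case
      proof
        fix r assume "r \<in> carrier R"
        then show "\<exists>m'\<in>?M. \<exists>r'\<in>carrier R. m' \<otimes>\<^bsub>R\<^esub> r = r' \<otimes>\<^bsub>R\<^esub> \<one>\<^bsub>R\<^esub>"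
        proof -
          have "\<one>\<^bsub>R\<^esub> \<otimes>\<^bsub>R\<^esub> r = r \<otimes>\<^bsub>R\<^esub> \<one>\<^bsub>R\<^esub>" using \<open>r \<in> carrier R\<close> by simp
          then show ?thesis using gen.gen_one \<open>r \<in> carrier R\<close> by blast
        qed
      qed
    next
      case (gen_step g m)
      show ?case
      proof
        fix r assume r: "r \<in> carrier R"
        from bspec[OF gen_step(3) r] obtain m1 r1 where m1: "m1 \<in> ?M" "r1 \<in> carrier R" "m1 \<otimes>\<^bsub>R\<^esub> r = r1 \<otimes>\<^bsub>R\<^esub> m"
          by blast
        obtain D where D: "D \<in> F" "g \<in> D" using gen_step(1) by blast
        have dD: "left_den_set R D" using assms(2) D(1) by blast
        from den_props(5)[OF dD m1(2) D(2)] obtain s r2 where s: "s \<in> D" "r2 \<in> carrier R" "s \<otimes>\<^bsub>R\<^esub> r1 = r2 \<otimes>\<^bsub>R\<^esub> g"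
          by blast
        have c: "s \<in> carrier R" "g \<in> carrier R" "m \<in> carrier R" "m1 \<in> carrier R"
          using Xc Mc D s gen_step m1 by auto
        have "(s \<otimes>\<^bsub>R\<^esub> m1) \<otimes>\<^bsub>R\<^esub> r = s \<otimes>\<^bsub>R\<^esub> (r1 \<otimes>\<^bsub>R\<^esub> m)"
          using c r m1 by (simp add: R.m_assoc)
        also have "\<dots> = (r2 \<otimes>\<^bsub>R\<^esub> g) \<otimes>\<^bsub>R\<^esub> m" using c m1 s by (simp add: R.m_assoc[symmetric])
        also have "\<dots> = r2 \<otimes>\<^bsub>R\<^esub> (g \<otimes>\<^bsub>R\<^esub> m)" using c s by (simp add: R.m_assoc)
        finally have "(s \<otimes>\<^bsub>R\<^esub> m1) \<otimes>\<^bsub>R\<^esub> r = r2 \<otimes>\<^bsub>R\<^esub> (g \<otimes>\<^bsub>R\<^esub> m)" .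
        moreover have "s \<otimes>\<^bsub>R\<^esub> m1 \<in> ?M" using s(1) D(1) m1(1) by (intro gen.gen_step) auto
        ultimately show "\<exists>m'\<in>?M. \<exists>r'\<in>carrier R. m' \<otimes>\<^bsub>R\<^esub> r = r' \<otimes>\<^bsub>R\<^esub> (g \<otimes>\<^bsub>R\<^esub> m)"
          using s(2) by (intro bexI) auto
      qed
    qed
  qed
  have den: "\<And>m. m \<in> ?M \<Longrightarrow> \<forall>r\<in>carrier R. r \<otimes>\<^bsub>R\<^esub> m = \<zero>\<^bsub>R\<^esub> \<longrightarrow> (\<exists>t\<in>?M. t \<otimes>\<^bsub>R\<^esub> r = \<zero>\<^bsub>R\<^esub>)"
  proof -
    fix m assume "m \<in> ?M"
    then show "\<forall>r\<in>carrier R. r \<otimes>\<^bsub>R\<^esub> m = \<zero>\<^bsub>R\<^esub> \<longrightarrow> (\<exists>t\<in>?M. t \<otimes>\<^bsub>R\<^esub> r = \<zero>\<^bsub>R\<^esub>)"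
    proof induct
      case gen_one
      show ?case
      proof (intro ballI impI)
        fix r assume "r \<in> carrier R" "r \<otimes>\<^bsub>R\<^esub> \<one>\<^bsub>R\<^esub> = \<zero>\<^bsub>R\<^esub>"
        then have "\<one>\<^bsub>R\<^esub> \<otimes>\<^bsub>R\<^esub> r = \<zero>\<^bsub>R\<^esub>" by simp
        then show "\<exists>t\<in>?M. t \<otimes>\<^bsub>R\<^esub> r = \<zero>\<^bsub>R\<^esub>" using gen.gen_one by blast
      qed
    next
      case (gen_step g m)
      show ?case
      proof (intro ballI impI)
        fix r assume r: "r \<in> carrier R" and z: "r \<otimes>\<^bsub>R\<^esub> (g \<otimes>\<^bsub>R\<^esub> m) = \<zero>\<^bsub>R\<^esub>"
        obtain D where D: "D \<in> F" "g \<in> D" using gen_step(1) by blast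
        have c: "g \<in> carrier R" "m \<in> carrier R" using Xc Mc D gen_step by auto
        have "(r \<otimes>\<^bsub>R\<^esub> g) \<otimes>\<^bsub>R\<^esub> m = \<zero>\<^bsub>R\<^esub>" using z c r by (simp add: R.m_assoc)
        moreover have "r \<otimes>\<^bsub>R\<^esub> g \<in> carrier R" using r c by simp
        ultimately obtain m1 where m1: "m1 \<in> ?M" "m1 \<otimes>\<^bsub>R\<^esub> (r \<otimes>\<^bsub>R\<^esub> g) = \<zero>\<^bsub>R\<^esub>"
          using gen_step(3) by blast
        have m1c: "m1 \<in> carrier R" using m1 Mc by auto
        have "(m1 \<otimes>\<^bsub>R\<^esub> r) \<otimes>\<^bsub>R\<^esub> g = \<zero>\<^bsub>R\<^esub>" using m1 m1c r c by (simp add: R.m_assoc)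
        have dD: "left_den_set R D" using assms(2) D(1) by blast
        have mr: "m1 \<otimes>\<^bsub>R\<^esub> r \<in> carrier R" using m1c r by simp
        from den_props(6)[OF dD mr D(2) \<open>(m1 \<otimes>\<^bsub>R\<^esub> r) \<otimes>\<^bsub>R\<^esub> g = \<zero>\<^bsub>R\<^esub>\<close>]
        obtain s where s: "s \<in> D" "s \<otimes>\<^bsub>R\<^esub> (m1 \<otimes>\<^bsub>R\<^esub> r) = \<zero>\<^bsub>R\<^esub>" by blast
        have "s \<in> carrier R" using s D Xc by auto
        then have "(s \<otimes>\<^bsub>R\<^esub> m1) \<otimes>\<^bsub>R\<^esub> r = \<zero>\<^bsub>R\<^esub>" using s m1c r by (simp add: R.m_assoc)
        moreover have "s \<otimes>\<^bsub>R\<^esub> m1 \<in> ?M" using s(1) D(1) m1(1) by (intro gen.gen_step) auto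
        ultimately show "\<exists>t\<in>?M. t \<otimes>\<^bsub>R\<^esub> r = \<zero>\<^bsub>R\<^esub>" by blast
      qed
    qed
  qed
  show ?thesis
    unfolding left_den_set_def left_ore_set_def mult_subset_def
    using Mc gen.gen_one M0 Mmult ore den by blast
qed

lemma gen_sup:
  assumes "ring R" "X \<subseteq> carrier R"
  shows "X \<subseteq> gen R X"
proof
  interpret R: ring R by fact
  fix x assume "x \<in> X"
  then have "x \<otimes>\<^bsub>R\<^esub> \<one>\<^bsub>R\<^esub> \<in> gen R X" by (rule gen.gen_step) (rule gen.gen_one)
  then show "x \<in> gen R X" using assms \<open>x \<in> X\<close> by auto
qed


definition cc :: "('a, 'm) ring_scheme \<Rightarrow> (nat \<Rightarrow> 'a set) \<Rightarrow> nat set \<Rightarrow> 'a set" where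
  "cc R S J = {x \<in> carrier R. \<forall>k\<in>J. x \<in> ass R (S k)}"

locale thmctx =
  fixes R :: "('a, 'm) ring_scheme" and n :: nat and S :: "nat \<Rightarrow> 'a set"
    and Q :: "nat \<Rightarrow> ('b, 'n) ring_scheme" and \<sigma> :: "nat \<Rightarrow> 'a \<Rightarrow> 'b"
  assumes ringR: "ring R"
    and maxeq: "maxDen_l R = S ` {..<n}"
    and injS: "inj_on S {..<n}"
    and locs: "\<forall>i<n. is_left_localization R (S i) (Q i) (\<sigma> i)"
begin

lemma den_i: "i < n \<Longrightarrow> left_den_set R (S i)"
  using maxeq unfolding maxDen_l_def Den_l_def by auto

lemma max_i: "i < n \<Longrightarrow> left_den_set R T \<Longrightarrow> S i \<subseteq> T \<Longrightarrow> T = S i"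
  using maxeq unfolding maxDen_l_def Den_l_def by auto

lemma loc_i: "i < n \<Longrightarrow> is_left_localization R (S i) (Q i) (\<sigma> i)"
  using locs by blast

lemma rad: "loc_radical R = cc R S {..<n}"
  unfolding loc_radical_def cc_def maxeq by auto

lemma zero_cc: "\<zero>\<^bsub>R\<^esub> \<in> cc R S J" if "J \<subseteq> {..<n}"
  using that zero_in_ass[OF ringR den_i] ring.ring_simprules(2)[OF ringR]
  unfolding cc_def by blast

lemma part23: "loc_radical R = {\<zero>\<^bsub>R\<^esub>} \<longleftrightarrow> inj_on (\<lambda>r. \<lambda>i\<in>{..<n}. \<sigma> i r) (carrier R)"
proof
  interpret R: ring R by (rule ringR)
  assume a: "loc_radical R = {\<zero>\<^bsub>R\<^esub>}"
  show "inj_on (\<lambda>r. \<lambda>i\<in>{..<n}. \<sigma> i r) (carrier R)"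
  proof (rule inj_onI)
    fix x y assume x: "x \<in> carrier R" and y: "y \<in> carrier R"
      and e: "(\<lambda>i\<in>{..<n}. \<sigma> i x) = (\<lambda>i\<in>{..<n}. \<sigma> i y)"
    have "x \<ominus>\<^bsub>R\<^esub> y \<in> cc R S {..<n}"
      unfolding cc_def
    proof (intro CollectI conjI ballI)
      show "x \<ominus>\<^bsub>R\<^esub> y \<in> carrier R" using x y by simp
      fix k assume k: "k \<in> {..<n}"
      have ek: "\<sigma> k x = \<sigma> k y" using fun_cong[OF e, of k] k by simp
      interpret Q: ring "Q k" using loc_props(1)[OF loc_i] k by simp
      interpret h: ring_hom_ring R "Q k" "\<sigma> k" using loc_hom_ring[OF ringR loc_i] k by simp
      have "\<sigma> k (x \<ominus>\<^bsub>R\<^esub> y) = \<zero>\<^bsub>Q k\<^esub>" using x y ek by (simp add: a_minus_def Q.r_neg)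
      then show "x \<ominus>\<^bsub>R\<^esub> y \<in> ass R (S k)" using loc_props(5)[OF loc_i] k x y by simp
    qed
    then have "x \<ominus>\<^bsub>R\<^esub> y = \<zero>\<^bsub>R\<^esub>" using a rad by auto
    then show "x = y" using minus_zero_eq[OF ringR x y] by simp
  qed
next
  interpret R: ring R by (rule ringR)
  assume inj: "inj_on (\<lambda>r. \<lambda>i\<in>{..<n}. \<sigma> i r) (carrier R)"
  show "loc_radical R = {\<zero>\<^bsub>R\<^esub>}"
  proof
    show "{\<zero>\<^bsub>R\<^esub>} \<subseteq> loc_radical R" using zero_cc rad by auto
    show "loc_radical R \<subseteq> {\<zero>\<^bsub>R\<^esub>}"
    proof
      fix x assume "x \<in> loc_radical R"
      then have x: "x \<in> carrier R" "\<And>k. k < n \<Longrightarrow> x \<in> ass R (S k)" using rad unfolding cc_def by auto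
      have "(\<lambda>i\<in>{..<n}. \<sigma> i x) = (\<lambda>i\<in>{..<n}. \<sigma> i \<zero>\<^bsub>R\<^esub>)"
      proof
        fix k show "(\<lambda>i\<in>{..<n}. \<sigma> i x) k = (\<lambda>i\<in>{..<n}. \<sigma> i \<zero>\<^bsub>R\<^esub>) k"
        proof (cases "k < n")
          case True
          interpret h: ring_hom_ring R "Q k" "\<sigma> k" using loc_hom_ring[OF ringR loc_i] True by simp
          have "\<sigma> k x = \<zero>\<^bsub>Q k\<^esub>" using loc_props(5)[OF loc_i[OF True]] x True by simp
          then show ?thesis using True by simp
        qed simp
      qed
      then have "x = \<zero>\<^bsub>R\<^esub>" using inj x by (auto dest: inj_onD)
      then show "x \<in> {\<zero>\<^bsub>R\<^esub>}" by simp
    qed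
  qed
qed

end

context thmctx begin
lemma part21:
  assumes "loc_radical R = {\<zero>\<^bsub>R\<^esub>}" "\<forall>i<n. division_ring (Q i)"
  shows "left_localizable_ring R"
  unfolding left_localizable_ring_def
proof (intro ballI impI)
  fix x assume x: "x \<in> carrier R" "x \<noteq> \<zero>\<^bsub>R\<^esub>"
  have "cc R S {..<n} = {\<zero>\<^bsub>R\<^esub>}" using trans[OF sym[OF rad] assms(1)] .
  then have "x \<notin> cc R S {..<n}" using x(2) by blast
  then obtain k where k: "k < n" "x \<notin> ass R (S k)" using x unfolding cc_def by auto
  have "\<sigma> k x \<noteq> \<zero>\<^bsub>Q k\<^esub>" using loc_props(5)[OF loc_i[OF k(1)]] x k by simp
  moreover have "\<sigma> k x \<in> carrier (Q k)"
    using ring_hom_closed[OF loc_props(2)[OF loc_i[OF k(1)]] x(1)] .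
  moreover have "division_ring (Q k)" using assms(2) k(1) by blast
  ultimately have "\<sigma> k x \<in> Units (Q k)" unfolding division_ring_def by blast
  then have Umem: "x \<in> {r \<in> carrier R. \<sigma> k r \<in> Units (Q k)}" using x by simp
  have UD: "{r \<in> carrier R. \<sigma> k r \<in> Units (Q k)} \<in> Den_l R"
    using U_den[OF ringR den_i[OF k(1)] loc_i[OF k(1)]] unfolding Den_l_def by simp
  show "left_localizable_elem R x"
    unfolding left_localizable_elem_def using bexI[of "\<lambda>T. x \<in> T", OF Umem UD] .
qed

lemma nonzero_in_S:
  assumes "left_localizable_ring R" "x \<in> carrier R" "x \<noteq> \<zero>\<^bsub>R\<^esub>"
  shows "\<exists>k<n. x \<in> S k"
proof -
  obtain T where "T \<in> Den_l R" "x \<in> T"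
    using assms unfolding left_localizable_ring_def left_localizable_elem_def by blast
  then obtain M where "M \<in> maxDen_l R" "x \<in> M" using den_in_max[OF ringR] by blast
  then show ?thesis using maxeq by auto
qed

lemma rad_zero:
  assumes "left_localizable_ring R"
  shows "loc_radical R = {\<zero>\<^bsub>R\<^esub>}"
proof
  show "{\<zero>\<^bsub>R\<^esub>} \<subseteq> loc_radical R" using zero_cc rad by auto
  show "loc_radical R \<subseteq> {\<zero>\<^bsub>R\<^esub>}"
  proof
    fix x assume "x \<in> loc_radical R"
    then have x: "x \<in> carrier R" "\<And>k. k < n \<Longrightarrow> x \<in> ass R (S k)" using rad unfolding cc_def by auto
    show "x \<in> {\<zero>\<^bsub>R\<^esub>}"
    proof (rule ccontr)
      assume "x \<notin> {\<zero>\<^bsub>R\<^esub>}"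
      then obtain k where "k < n" "x \<in> S k" using nonzero_in_S[OF assms x(1)] by auto
      then show False using S_ass_disj[OF ringR den_i] x(2) by blast
    qed
  qed
qed

lemma cc_left:
  assumes "J \<subseteq> {..<n}" "x \<in> cc R S J" "r \<in> carrier R"
  shows "r \<otimes>\<^bsub>R\<^esub> x \<in> cc R S J"
proof -
  have x: "x \<in> carrier R" "\<And>k. k \<in> J \<Longrightarrow> x \<in> ass R (S k)" using assms(2) unfolding cc_def by auto
  have "\<And>k. k \<in> J \<Longrightarrow> r \<otimes>\<^bsub>R\<^esub> x \<in> ass R (S k)"
  proof -
    fix k assume k: "k \<in> J"
    then have "k < n" using assms(1) by auto
    then show "r \<otimes>\<^bsub>R\<^esub> x \<in> ass R (S k)" using ass_left[OF ringR den_i x(2)[OF k] assms(3)] by simp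
  qed
  moreover have "r \<otimes>\<^bsub>R\<^esub> x \<in> carrier R" using x assms(3) ring.ring_simprules(5)[OF ringR] by blast
  ultimately show ?thesis unfolding cc_def by blast
qed

lemma cc_right:
  assumes "J \<subseteq> {..<n}" "x \<in> cc R S J" "r \<in> carrier R"
  shows "x \<otimes>\<^bsub>R\<^esub> r \<in> cc R S J"
proof -
  have x: "x \<in> carrier R" "\<And>k. k \<in> J \<Longrightarrow> x \<in> ass R (S k)" using assms(2) unfolding cc_def by auto
  have "\<And>k. k \<in> J \<Longrightarrow> x \<otimes>\<^bsub>R\<^esub> r \<in> ass R (S k)"
  proof -
    fix k assume k: "k \<in> J"
    then have "k < n" using assms(1) by auto
    then show "x \<otimes>\<^bsub>R\<^esub> r \<in> ass R (S k)" using ass_right[OF ringR den_i x(2)[OF k] assms(3)] by simp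
  qed
  moreover have "x \<otimes>\<^bsub>R\<^esub> r \<in> carrier R" using x assms(3) ring.ring_simprules(5)[OF ringR] by blast
  ultimately show ?thesis unfolding cc_def by blast
qed

lemma cc_in_S:
  assumes "left_localizable_ring R" "i < n" "z \<in> cc R S ({..<n} - {i})" "z \<noteq> \<zero>\<^bsub>R\<^esub>"
  shows "z \<in> S i"
proof -
  have zc: "z \<in> carrier R" using assms(3) unfolding cc_def by auto
  obtain k where k: "k < n" "z \<in> S k" using nonzero_in_S[OF assms(1) zc assms(4)] by blast
  show ?thesis
  proof (cases "k = i")
    case True then show ?thesis using k by simp
  next
    case False
    then have "z \<in> ass R (S k)" using assms(3) k unfolding cc_def by auto
    then show ?thesis using S_ass_disj[OF ringR den_i[OF k(1)] k(2)] by blast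
  qed
qed

lemma good_unit:
  assumes "left_localizable_ring R" "i < n" "y \<in> cc R S ({..<n} - {i})" "y \<noteq> \<zero>\<^bsub>R\<^esub>"
    "x \<in> carrier R" "x \<notin> ass R (S i)"
  shows "\<sigma> i x \<in> Units (Q i)"
proof -
  interpret R: ring R by (rule ringR)
  have L: "is_left_localization R (S i) (Q i) (\<sigma> i)" using loc_i[OF assms(2)] .
  have D: "left_den_set R (S i)" using den_i[OF assms(2)] .
  interpret Q: ring "Q i" using loc_props(1)[OF L] .
  interpret h: ring_hom_ring R "Q i" "\<sigma> i" using loc_hom_ring[OF ringR L] .
  have yS: "y \<in> S i" using cc_in_S[OF assms(1-4)] .
  have yc: "y \<in> carrier R" using yS den_props(1)[OF D] by auto
  have J: "{..<n} - {i} \<subseteq> {..<n}" by auto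
  have "y \<otimes>\<^bsub>R\<^esub> x \<notin> ass R (S i)" using ass_cancel_left[OF ringR D yS assms(5)] assms(6) by blast
  then have "y \<otimes>\<^bsub>R\<^esub> x \<noteq> \<zero>\<^bsub>R\<^esub>" using zero_in_ass[OF ringR D] by auto
  then have yx: "y \<otimes>\<^bsub>R\<^esub> x \<in> S i"
    using cc_in_S[OF assms(1,2) cc_right[OF J assms(3,5)]] by blast
  have "x \<otimes>\<^bsub>R\<^esub> y \<notin> ass R (S i)" using ass_cancel_right[OF ringR D yS assms(5)] assms(6) by blast
  then have "x \<otimes>\<^bsub>R\<^esub> y \<noteq> \<zero>\<^bsub>R\<^esub>" using zero_in_ass[OF ringR D] by auto
  then have xy: "x \<otimes>\<^bsub>R\<^esub> y \<in> S i"
    using cc_in_S[OF assms(1,2) cc_left[OF J assms(3,5)]] by blast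
  have u1: "\<sigma> i y \<otimes>\<^bsub>Q i\<^esub> \<sigma> i x \<in> Units (Q i)" using loc_props(3)[OF L yx] yc assms(5) by simp
  have u2: "\<sigma> i x \<otimes>\<^bsub>Q i\<^esub> \<sigma> i y \<in> Units (Q i)" using loc_props(3)[OF L xy] yc assms(5) by simp
  have c: "\<sigma> i x \<in> carrier (Q i)" "\<sigma> i y \<in> carrier (Q i)" using yc assms(5) by auto
  let ?l = "inv\<^bsub>Q i\<^esub> (\<sigma> i y \<otimes>\<^bsub>Q i\<^esub> \<sigma> i x) \<otimes>\<^bsub>Q i\<^esub> \<sigma> i y"
  let ?r = "\<sigma> i y \<otimes>\<^bsub>Q i\<^esub> inv\<^bsub>Q i\<^esub> (\<sigma> i x \<otimes>\<^bsub>Q i\<^esub> \<sigma> i y)"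
  have "?l \<otimes>\<^bsub>Q i\<^esub> \<sigma> i x = \<one>\<^bsub>Q i\<^esub>" using u1 c by (simp add: Q.m_assoc)
  moreover have "\<sigma> i x \<otimes>\<^bsub>Q i\<^esub> ?r = \<one>\<^bsub>Q i\<^esub>" using u2 c by (simp add: Q.m_assoc[symmetric])
  moreover have "?l \<in> carrier (Q i)" "?r \<in> carrier (Q i)" using u1 u2 c by auto
  ultimately show ?thesis using monoid_units_lr[OF Q.monoid_axioms c(1)] by blast
qed

lemma good_div:
  assumes "i < n" "\<forall>x\<in>carrier R. x \<notin> ass R (S i) \<longrightarrow> \<sigma> i x \<in> Units (Q i)"
  shows "division_ring (Q i)"
proof -
  have L: "is_left_localization R (S i) (Q i) (\<sigma> i)" using loc_i[OF assms(1)] .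
  have D: "left_den_set R (S i)" using den_i[OF assms(1)] .
  interpret Q: ring "Q i" using loc_props(1)[OF L] .
  interpret h: ring_hom_ring R "Q i" "\<sigma> i" using loc_hom_ring[OF ringR L] .
  have "\<forall>q\<in>carrier (Q i). q \<noteq> \<zero>\<^bsub>Q i\<^esub> \<longrightarrow> q \<in> Units (Q i)"
  proof (intro ballI impI)
    fix q assume q: "q \<in> carrier (Q i)" "q \<noteq> \<zero>\<^bsub>Q i\<^esub>"
    obtain s r where sr: "s \<in> S i" "r \<in> carrier R" "q = inv\<^bsub>Q i\<^esub> (\<sigma> i s) \<otimes>\<^bsub>Q i\<^esub> \<sigma> i r"
      using loc_props(4)[OF L q(1)] by blast
    have su: "\<sigma> i s \<in> Units (Q i)" using loc_props(3)[OF L sr(1)] .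
    have "\<sigma> i r \<noteq> \<zero>\<^bsub>Q i\<^esub>" using sr q su by auto
    then have "r \<notin> ass R (S i)" using loc_props(5)[OF L sr(2)] by simp
    then have "\<sigma> i r \<in> Units (Q i)" using assms(2) sr(2) by blast
    then show "q \<in> Units (Q i)" using su sr(3) by simp
  qed
  then show ?thesis unfolding division_ring_def using loc_one_ne_zero[OF ringR D L] Q.ring_axioms by blast
qed

lemma good_meets:
  assumes "i < n" "g < n" "i \<noteq> g" "\<forall>x\<in>carrier R. x \<notin> ass R (S g) \<longrightarrow> \<sigma> g x \<in> Units (Q g)"
  shows "\<exists>s\<in>S i. s \<in> ass R (S g)"
proof (rule ccontr)
  assume neg: "\<not> (\<exists>s\<in>S i. s \<in> ass R (S g))"
  let ?U = "{r \<in> carrier R. \<sigma> g r \<in> Units (Q g)}"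
  have Ud: "left_den_set R ?U" using U_den[OF ringR den_i[OF assms(2)] loc_i[OF assms(2)]] .
  have "S i \<subseteq> ?U" using neg assms(4) den_props(1)[OF den_i[OF assms(1)]] by blast
  then have "?U = S i" using max_i[OF assms(1) Ud] by blast
  moreover have "S g \<subseteq> ?U" using loc_props(3)[OF loc_i[OF assms(2)]] den_props(1)[OF den_i[OF assms(2)]] by blast
  then have "?U = S g" using max_i[OF assms(2) Ud] by blast
  ultimately have "S i = S g" by simp
  then show False using injS assms(1-3) by (auto dest: inj_onD)
qed

lemma prod_meets:
  assumes "finite G" "G \<subseteq> {..<n}" "i < n" "\<forall>g\<in>G. \<exists>s\<in>S i. s \<in> ass R (S g)"
  shows "\<exists>p\<in>S i. p \<in> cc R S G"
  using assms
proof (induction G rule: finite_induct)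
  case empty
  then show ?case using den_props(2)[OF den_i[OF assms(3)]] ring.ring_simprules(6)[OF ringR]
    unfolding cc_def by blast
next
  case (insert g G)
  obtain p where p: "p \<in> S i" "p \<in> cc R S G" using insert by auto
  obtain s where s: "s \<in> S i" "s \<in> ass R (S g)" using insert by auto
  have g: "g < n" using insert by auto
  have sc: "s \<in> carrier R" "p \<in> carrier R" using s p den_props(1)[OF den_i[OF assms(3)]] by auto
  have "p \<otimes>\<^bsub>R\<^esub> s \<in> S i" using den_props(4)[OF den_i[OF assms(3)] p(1) s(1)] .
  moreover have "p \<otimes>\<^bsub>R\<^esub> s \<in> cc R S G" using cc_right[OF _ p(2) sc(1)] insert by auto
  moreover have "p \<otimes>\<^bsub>R\<^esub> s \<in> ass R (S g)" using ass_left[OF ringR den_i[OF g] s(2) sc(2)] .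
  ultimately show ?case unfolding cc_def by auto
qed


lemma lemL:
  assumes "J \<subseteq> {..<n}" "z \<in> cc R S J" "z \<noteq> \<zero>\<^bsub>R\<^esub>"
    "\<forall>k<n. k \<notin> J \<longrightarrow> (\<forall>w\<in>cc R S J. w \<in> ass R (S k) \<longrightarrow> w = \<zero>\<^bsub>R\<^esub>)"
    "k1 < n" "k2 < n" "k1 \<notin> J" "k2 \<notin> J"
  shows "k1 = k2"
proof -
  interpret R: ring R by (rule ringR)
  let ?F = "S ` ({..<n} - J)"
  let ?Z = "cc R S J - {\<zero>\<^bsub>R\<^esub>}"
  have Fd: "\<forall>D\<in>?F. left_den_set R D" using den_i by auto
  have Fc: "\<Union>?F \<subseteq> carrier R" using den_props(1)[OF den_i] by auto
  have Zc: "?Z \<subseteq> carrier R" unfolding cc_def by auto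
  have cl: "\<forall>g\<in>\<Union>?F. \<forall>w\<in>?Z. g \<otimes>\<^bsub>R\<^esub> w \<in> ?Z"
  proof (intro ballI)
    fix g w assume g: "g \<in> \<Union>?F" and w: "w \<in> ?Z"
    then obtain k where k: "k < n" "k \<notin> J" "g \<in> S k" by auto
    have gc: "g \<in> carrier R" using g Fc by auto
    have wc: "w \<in> carrier R" using w Zc by auto
    have "g \<otimes>\<^bsub>R\<^esub> w \<in> cc R S J" using cc_left[OF assms(1) _ gc] w by auto
    moreover have "g \<otimes>\<^bsub>R\<^esub> w \<noteq> \<zero>\<^bsub>R\<^esub>"
    proof
      assume "g \<otimes>\<^bsub>R\<^esub> w = \<zero>\<^bsub>R\<^esub>"
      then have "w \<in> ass R (S k)" using k(3) wc unfolding ass_def by blast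
      then have "w = \<zero>\<^bsub>R\<^esub>" using assms(4) k w by blast
      then show False using w by simp
    qed
    ultimately show "g \<otimes>\<^bsub>R\<^esub> w \<in> ?Z" by simp
  qed
  have zZ: "z \<in> ?Z" using assms(2,3) by simp
  have Md: "left_den_set R (gen R (\<Union>?F))"
    using gen_den[OF ringR Fd zZ Zc _ cl] by simp
  have sub: "\<Union>?F \<subseteq> gen R (\<Union>?F)" using gen_sup[OF ringR Fc] .
  have "S k1 \<subseteq> gen R (\<Union>?F)" using sub assms(5,7) by auto
  then have e1: "gen R (\<Union>?F) = S k1" using max_i[OF assms(5) Md] by blast
  have "S k2 \<subseteq> gen R (\<Union>?F)" using sub assms(6,8) by auto
  then have e2: "gen R (\<Union>?F) = S k2" using max_i[OF assms(6) Md] by blast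
  have "S k1 = S k2" using e1 e2 by simp
  then show ?thesis using injS assms(5,6) by (auto dest: inj_onD)
qed

lemma all_good:
  assumes lr: "left_localizable_ring R" and i0: "i0 < n"
  shows "\<exists>y\<in>cc R S ({..<n} - {i0}). y \<noteq> \<zero>\<^bsub>R\<^esub>"
proof (rule ccontr)
  assume bad: "\<not> (\<exists>y\<in>cc R S ({..<n} - {i0}). y \<noteq> \<zero>\<^bsub>R\<^esub>)"
  define G where "G = {i. i < n \<and> (\<exists>y\<in>cc R S ({..<n} - {i}). y \<noteq> \<zero>\<^bsub>R\<^esub>)}"
  have Gsub: "G \<subseteq> {..<n}" unfolding G_def by auto
  have Gfin: "finite G" using Gsub finite_subset by blast
  have i0G: "i0 \<notin> G" using bad unfolding G_def by blast
  have meets: "\<forall>g\<in>G. \<exists>s\<in>S i0. s \<in> ass R (S g)"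
  proof
    fix g assume g: "g \<in> G"
    then have gn: "g < n" and gy: "\<exists>y\<in>cc R S ({..<n} - {g}). y \<noteq> \<zero>\<^bsub>R\<^esub>" unfolding G_def by auto
    then obtain y where y: "y \<in> cc R S ({..<n} - {g})" "y \<noteq> \<zero>\<^bsub>R\<^esub>" by blast
    have "\<forall>x\<in>carrier R. x \<notin> ass R (S g) \<longrightarrow> \<sigma> g x \<in> Units (Q g)"
      using good_unit[OF lr gn y] by blast
    moreover have "i0 \<noteq> g" using g i0G by blast
    ultimately show "\<exists>s\<in>S i0. s \<in> ass R (S g)" using good_meets[OF i0 gn] by blast
  qed
  obtain p where p: "p \<in> S i0" "p \<in> cc R S G" using prod_meets[OF Gfin Gsub i0 meets] by blast
  have p0: "p \<noteq> \<zero>\<^bsub>R\<^esub>" using p(1) den_props(3)[OF den_i[OF i0]] by blast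
  let ?A = "{J. G \<subseteq> J \<and> J \<subseteq> {..<n} \<and> (\<exists>z\<in>cc R S J. z \<noteq> \<zero>\<^bsub>R\<^esub>)}"
  have Afin: "finite ?A" by (rule finite_subset[of _ "Pow {..<n}"]) auto
  have GA: "G \<in> ?A" using Gsub p p0 by blast
  have Ane: "?A \<noteq> {}" using GA by (metis empty_iff)
  from finite_has_maximal[OF Afin Ane] obtain J where JA: "J \<in> ?A" and maxJ: "\<forall>b\<in>?A. J \<subseteq> b \<longrightarrow> J = b"
    ..
  have GJ: "G \<subseteq> J" and Jn: "J \<subseteq> {..<n}" using JA by auto
  obtain z where z: "z \<in> cc R S J" "z \<noteq> \<zero>\<^bsub>R\<^esub>" using JA by blast
  have "J \<noteq> {..<n}"
  proof
    assume "J = {..<n}"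
    then have "z \<in> loc_radical R" using z rad by simp
    then show False using rad_zero[OF lr] z by simp
  qed
  then obtain i1 where i1: "i1 < n" "i1 \<notin> J" using Jn by blast
  have cond: "\<forall>k<n. k \<notin> J \<longrightarrow> (\<forall>w\<in>cc R S J. w \<in> ass R (S k) \<longrightarrow> w = \<zero>\<^bsub>R\<^esub>)"
  proof (intro allI impI ballI)
    fix k w assume k: "k < n" "k \<notin> J" and w: "w \<in> cc R S J" "w \<in> ass R (S k)"
    show "w = \<zero>\<^bsub>R\<^esub>"
    proof (rule ccontr)
      assume "w \<noteq> \<zero>\<^bsub>R\<^esub>"
      moreover have "w \<in> cc R S (insert k J)" using w unfolding cc_def by auto
      ultimately have "insert k J \<in> ?A" using GJ Jn k by blast
      then have "J = insert k J" using maxJ by blast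
      then show False using k by blast
    qed
  qed
  have all: "\<And>k. k < n \<Longrightarrow> k \<notin> J \<Longrightarrow> k = i1"
    using lemL[OF Jn z(1) z(2) cond _ i1(1) _ i1(2)] by blast
  have "J = {..<n} - {i1}"
  proof (intro equalityI subsetI)
    fix k assume k: "k \<in> J"
    then have "k < n" using Jn by auto
    moreover have "k \<noteq> i1" using k i1(2) by auto
    ultimately show "k \<in> {..<n} - {i1}" by simp
  next
    fix k assume k: "k \<in> {..<n} - {i1}"
    then have "k < n" "k \<noteq> i1" by auto
    then show "k \<in> J" using all by blast
  qed
  then have "i1 \<in> G" unfolding G_def using i1(1) z by blast
  then show False using GJ i1(2) by blast
qed

lemma main:
  "(left_localizable_ring R \<longleftrightarrow>
            (loc_radical R = {\<zero>\<^bsub>R\<^esub>} \<and> (\<forall>i<n. division_ring (Q i))))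
       \<and> ((loc_radical R = {\<zero>\<^bsub>R\<^esub>} \<and> (\<forall>i<n. division_ring (Q i))) \<longleftrightarrow>
            (inj_on (\<lambda>r. \<lambda>i\<in>{..<n}. \<sigma> i r) (carrier R) \<and> (\<forall>i<n. division_ring (Q i))))"
proof -
  have "left_localizable_ring R \<Longrightarrow> (\<forall>i<n. division_ring (Q i))"
  proof (intro allI impI)
    fix i assume lr: "left_localizable_ring R" and i: "i < n"
    obtain y where y: "y \<in> cc R S ({..<n} - {i})" "y \<noteq> \<zero>\<^bsub>R\<^esub>" using all_good[OF lr i] by blast
    show "division_ring (Q i)" using good_div[OF i] good_unit[OF lr i y] by blast
  qed
  then show ?thesis using rad_zero part21 part23 by blast
qed

end

theorem theorem3p5:
  fixes R :: "('a, 'm) ring_scheme"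
    and n :: nat
    and S :: "nat \<Rightarrow> 'a set"
    and Q :: "nat \<Rightarrow> ('b, 'n) ring_scheme"
    and \<sigma> :: "nat \<Rightarrow> 'a \<Rightarrow> 'b"
  assumes "ring R"
    and "maxDen_l R = S ` {..<n}"
    and "inj_on S {..<n}"
    and "\<forall>i<n. is_left_localization R (S i) (Q i) (\<sigma> i)"
  shows "(left_localizable_ring R \<longleftrightarrow>
            (loc_radical R = {\<zero>\<^bsub>R\<^esub>} \<and> (\<forall>i<n. division_ring (Q i))))
       \<and> ((loc_radical R = {\<zero>\<^bsub>R\<^esub>} \<and> (\<forall>i<n. division_ring (Q i))) \<longleftrightarrow>
            (inj_on (\<lambda>r. \<lambda>i\<in>{..<n}. \<sigma> i r) (carrier R) \<and> (\<forall>i<n. division_ring (Q i))))"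
  using thmctx.main[OF thmctx.intro[OF assms]] .

end
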